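(* Let $n\geq 1$. For every finite frame $\mathcal{F}$ in which all theorems of $\mathrm{K4}\mathbb{C}_n$ are valid, there exist a hereditarily $(n+1)$-irresolvable T$_D$ space $X$ and a surjective $d$-morphism from $X$ onto $\mathcal{F}$.
   Context: Modal formulas use propositional variables, Boolean connectives and $\Diamond,\Box$. A normal logic is a set of formulas containing all tautologies and all instances of $\Box(\varphi\to\psi)\to(\Box\varphi\to\Box\psi)$, closed under modus ponens and $\Box$-generalisation. For $n\ge1$ and formulas $\varphi_0,\dots,\varphi_n$, let $\mathbb{P}_n(\varphi_0,\dots,\varphi_n)=\Diamond(\varphi_1\land\Diamond(\varphi_2\land\cdots\land\Diamond(\varphi_n\land\Diamond\varphi_0))\cdots)$, let $\mathbb{D}_n(\varphi_0,\dots,\varphi_n)=\bigwedge_{i<j\le n}\neg(\varphi_i\land\varphi_j)$, and $\Box^*\psi=\psi\land\Box\psi$. $\mathbb{C}_n$ is the scheme $\Box^*\mathbb{D}_n(\varphi_0,\dots,\varphi_n)\to(\Diamond\varphi_0\to\Diamond(\varphi_0\land\neg\mathbb{P}_n(\varphi_0,\dots,\varphi_n)))$. $\mathrm{K4}\mathbb{C}_n$ is the smallest normal logic containing all instances of $\Diamond\Diamond\varphi\to\Diamond\varphi$ and of $\mathbb{C}_n$. Validity in a Kripke frame $(W,R)$ is the standard relational one ($\Diamond\varphi$ true at $x$ iff $\varphi$ true at some $R$-successor of $x$). For a space $X$ and $Y\subseteq X$, $\mathrm{d}_XY$ is the set of limit points of $Y$ ($x$ such that every $O-\{x\}$, $O$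 an open neighbourhood of $x$, meets $Y$). $S$ is crowded in $X$ if $S\subseteq\mathrm{d}_XS$. $X$ is T$_D$ if $\mathrm{d}_X\{x\}$ is closed for all $x$. $X$ is $k$-resolvable if it has $k$ pairwise disjoint non-empty dense subsets, and hereditarily $k$-irresolvable if no non-empty subspace is $k$-resolvable. For a transitive frame $\mathcal{F}=(W,R)$, $W_R$ denotes $W$ with the topology whose open sets are the $R$-up-sets. A $d$-morphism from $X$ to $\mathcal{F}$ is $f:X\to W$ such that (i) $f$ is continuous and open as a map $X\to W_R$; (ii) if $w$ is $R$-reflexive then $f^{-1}\{w\}$ is crowded in $X$; (iii) if $w$ is $R$-irreflexive then $f^{-1}\{w\}\cap\mathrm{d}_Xf^{-1}\{w\}=\emptyset$. *)

theory Defs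
  imports "HOL-Analysis.Analysis"
begin

datatype fm = Var nat | Bot | Neg fm | And fm fm | Or fm fm | Imp fm fm | Box fm

definition Dia :: "fm \<Rightarrow> fm" where
  "Dia \<phi> = Neg (Box (Neg \<phi>))"

definition Top :: fm where "Top = Neg Bot"

fun peval :: "(fm \<Rightarrow> bool) \<Rightarrow> fm \<Rightarrow> bool" where
  "peval v (Var p) = v (Var p)"
| "peval v Bot = False"
| "peval v (Neg \<phi>) = (\<not> peval v \<phi>)"
| "peval v (And \<phi> \<psi>) = (peval v \<phi> \<and> peval v \<psi>)"
| "peval v (Or \<phi> \<psi>) = (peval v \<phi> \<or> peval v \<psi>)"
| "peval v (Imp \<phi> \<psi>) = (peval v \<phi> \<longrightarrow> peval v \<psi>)"
| "peval v (Box \<phi>) = v (Box \<phi>)"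

definition tautology :: "fm \<Rightarrow> bool" where
  "tautology \<phi> \<longleftrightarrow> (\<forall>v. peval v \<phi>)"

text \<open>Pc phi i k = Dia(phi i \<and> Dia(phi (i+1) \<and> ... Dia(phi (i+k-1) \<and> Dia(phi 0))...)),
  so P_n(phi 0,...,phi n) = Pc phi 1 n.\<close>

fun Pc :: "(nat \<Rightarrow> fm) \<Rightarrow> nat \<Rightarrow> nat \<Rightarrow> fm" where
  "Pc \<phi> i 0 = Dia (\<phi> 0)"
| "Pc \<phi> i (Suc k) = Dia (And (\<phi> i) (Pc \<phi> (Suc i) k))"

definition PP :: "nat \<Rightarrow> (nat \<Rightarrow> fm) \<Rightarrow> fm" where
  "PP n \<phi> = Pc \<phi> 1 n"

definition DD :: "nat \<Rightarrow> (nat \<Rightarrow> fm) \<Rightarrow> fm" where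
  "DD n \<phi> = foldr And [Neg (And (\<phi> i) (\<phi> j)). i \<leftarrow> [0..<Suc n], j \<leftarrow> [0..<Suc n], i < j] Top"

definition BoxStar :: "fm \<Rightarrow> fm" where
  "BoxStar \<psi> = And \<psi> (Box \<psi>)"

definition CC :: "nat \<Rightarrow> (nat \<Rightarrow> fm) \<Rightarrow> fm" where
  "CC n \<phi> = Imp (BoxStar (DD n \<phi>))
                 (Imp (Dia (\<phi> 0)) (Dia (And (\<phi> 0) (Neg (PP n \<phi>)))))"

inductive_set K4C :: "nat \<Rightarrow> fm set" for n :: nat where
  taut: "tautology \<phi> \<Longrightarrow> \<phi> \<in> K4C n"
| axK: "Imp (Box (Imp \<phi> \<psi>)) (Imp (Box \<phi>) (Box \<psi>)) \<in> K4C n"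
| ax4: "Imp (Dia (Dia \<phi>)) (Dia \<phi>) \<in> K4C n"
| axC: "CC n \<phi>s \<in> K4C n"
| mp: "\<phi> \<in> K4C n \<Longrightarrow> Imp \<phi> \<psi> \<in> K4C n \<Longrightarrow> \<psi> \<in> K4C n"
| nec: "\<phi> \<in> K4C n \<Longrightarrow> Box \<phi> \<in> K4C n"

fun sat :: "'w set \<Rightarrow> 'w rel \<Rightarrow> (nat \<Rightarrow> 'w set) \<Rightarrow> 'w \<Rightarrow> fm \<Rightarrow> bool" where
  "sat W R V w (Var p) = (w \<in> V p)"
| "sat W R V w Bot = False"
| "sat W R V w (Neg \<phi>) = (\<not> sat W R V w \<phi>)"
| "sat W R V w (And \<phi> \<psi>) = (sat W R V w \<phi> \<and> sat W R V w \<psi>)"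
| "sat W R V w (Or \<phi> \<psi>) = (sat W R V w \<phi> \<or> sat W R V w \<psi>)"
| "sat W R V w (Imp \<phi> \<psi>) = (sat W R V w \<phi> \<longrightarrow> sat W R V w \<psi>)"
| "sat W R V w (Box \<phi>) = (\<forall>u \<in> W. (w, u) \<in> R \<longrightarrow> sat W R V u \<phi>)"

definition frame :: "'w set \<Rightarrow> 'w rel \<Rightarrow> bool" where
  "frame W R \<longleftrightarrow> R \<subseteq> W \<times> W"

definition valid_in :: "'w set \<Rightarrow> 'w rel \<Rightarrow> fm \<Rightarrow> bool" where
  "valid_in W R \<phi> \<longleftrightarrow> (\<forall>V. \<forall>w \<in> W. sat W R V w \<phi>)"

definition crowded_in :: "'a topology \<Rightarrow> 'a set \<Rightarrow> bool" where
  "crowded_in X S \<longleftrightarrow> S \<subseteq> X derived_set_of S"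

definition T_D :: "'a topology \<Rightarrow> bool" where
  "T_D X \<longleftrightarrow> (\<forall>x \<in> topspace X. closedin X (X derived_set_of {x}))"

definition resolvable :: "nat \<Rightarrow> 'a topology \<Rightarrow> bool" where
  "resolvable k X \<longleftrightarrow>
     (\<exists>D :: nat \<Rightarrow> 'a set.
        (\<forall>i<k. D i \<noteq> {} \<and> D i \<subseteq> topspace X \<and> X closure_of (D i) = topspace X) \<and>
        (\<forall>i<k. \<forall>j<k. i \<noteq> j \<longrightarrow> D i \<inter> D j = {}))"

definition hered_irresolvable :: "nat \<Rightarrow> 'a topology \<Rightarrow> bool" where
  "hered_irresolvable k X \<longleftrightarrow>
     (\<forall>S. S \<subseteq> topspace X \<longrightarrow> S \<noteq> {} \<longrightarrow> \<not> resolvable k (subtopology X S))"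

definition up_topology :: "'w set \<Rightarrow> 'w rel \<Rightarrow> 'w topology" where
  "up_topology W R = topology (\<lambda>U. U \<subseteq> W \<and> (\<forall>x \<in> U. \<forall>y. (x, y) \<in> R \<longrightarrow> y \<in> U))"

definition d_morphism :: "'a topology \<Rightarrow> 'w set \<Rightarrow> 'w rel \<Rightarrow> ('a \<Rightarrow> 'w) \<Rightarrow> bool" where
  "d_morphism X W R f \<longleftrightarrow>
     continuous_map X (up_topology W R) f \<and>
     open_map X (up_topology W R) f \<and>
     (\<forall>w \<in> W. (w, w) \<in> R \<longrightarrow> crowded_in X {x \<in> topspace X. f x = w}) \<and>
     (\<forall>w \<in> W. (w, w) \<notin> R \<longrightarrow>
        {x \<in> topspace X. f x = w} \<inter> X derived_set_of {x \<in> topspace X. f x = w} = {})"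

end

theory Submission
  imports Defs
begin


lemma ex_ultra_nat:
  "\<exists>F::nat filter. F \<noteq> bot \<and> F \<le> cofinite \<and> (\<forall>P. eventually P F \<or> eventually (\<lambda>x. \<not> P x) F)"
proof -
  let ?R = "{(b, a). a \<noteq> (bot::nat filter) \<and> a \<le> b \<and> b \<le> cofinite}"
  have cof: "(cofinite::nat filter) \<noteq> bot" by simp
  have FR: "Field ?R = {G. G \<noteq> bot \<and> G \<le> cofinite}"
    by (auto simp: Field_def bot_unique)
  have "\<exists>m\<in>Field ?R. \<forall>a\<in>Field ?R. (m, a) \<in> ?R \<longrightarrow> a = m"
  proof (rule Zorns_po_lemma)
    show "Partial_order ?R"
      by (auto simp: partial_order_on_def preorder_on_def
          antisym_def refl_on_def trans_def Field_def bot_unique)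
    fix C assume C: "C \<in> Chains ?R"
    show "\<exists>u\<in>Field ?R. \<forall>a\<in>C. (a, u) \<in> ?R"
    proof (cases "C = {}")
      case True
      then show ?thesis using cof by (auto simp: FR intro!: exI[of _ cofinite])
    next
      case False
      have nb: "bot \<notin> C" using C by (auto simp: Chains_def)
      have "Inf C = bot \<longleftrightarrow> (\<exists>x\<in>C. x = bot)"
        unfolding trivial_limit_def using False C
        by (intro eventually_Inf_base) (auto simp: Chains_def)
      with nb have i1: "Inf C \<noteq> bot" by auto
      from False obtain x where "x \<in> C" by auto
      with C have i2: "Inf C \<le> cofinite"
        by (auto intro!: Inf_lower2[of x] simp: Chains_def)
      show ?thesis
        using C i1 i2 by (auto simp: FR Chains_def intro!: bexI[of _ "Inf C"] Inf_lower)
    qed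
  qed
  then obtain U :: "nat filter" where U: "U \<noteq> bot" "U \<le> cofinite"
    and mx0: "\<And>G. G \<noteq> bot \<Longrightarrow> G \<le> cofinite \<Longrightarrow> G \<le> U \<Longrightarrow> G = U"
    unfolding FR by blast
  have mx: "G = U" if "G \<noteq> bot" "G \<le> U" for G
    using mx0[OF that(1) order_trans[OF that(2) U(2)] that(2)] .
  have "eventually P U \<or> eventually (\<lambda>x. \<not> P x) U" for P
  proof (rule disjCI)
    assume "\<not> eventually (\<lambda>x. \<not> P x) U"
    then have "inf U (principal {x. P x}) \<noteq> bot"
      by (simp add: trivial_limit_def eventually_inf_principal not_eventually)
    then have "inf U (principal {x. P x}) = U" by (rule mx) simp
    moreover have "eventually P (inf U (principal {x. P x}))"
      by (simp add: eventually_inf_principal)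
    ultimately show "eventually P U" by simp
  qed
  with U show ?thesis by blast
qed




lemma sat_Dia[simp]: "sat W R V w (Dia \<phi>) \<longleftrightarrow> (\<exists>u\<in>W. (w,u)\<in>R \<and> sat W R V u \<phi>)"
  by (auto simp: Dia_def)

lemma sat_Top[simp]: "sat W R V w Top" by (simp add: Top_def)

lemma sat_foldr: "sat W R V w (foldr And xs Top) \<longleftrightarrow> (\<forall>x\<in>set xs. sat W R V w x)"
  by (induction xs) auto

lemma sat_DD: "sat W R V w (DD n \<phi>) \<longleftrightarrow>
   (\<forall>i j. i < j \<and> j \<le> n \<longrightarrow> \<not> (sat W R V w (\<phi> i) \<and> sat W R V w (\<phi> j)))"
proof -
  have e: "set [Neg (And (\<phi> i) (\<phi> j)). i \<leftarrow> [0..<Suc n], j \<leftarrow> [0..<Suc n], i < j]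
      = {Neg (And (\<phi> i) (\<phi> j)) | i j. i < j \<and> j \<le> n}"
    by (auto simp del: upt_Suc simp add: less_Suc_eq_le) (force, force)
  show ?thesis unfolding DD_def sat_foldr e by fastforce
qed

lemma sat_Pc:
  assumes "\<And>a b. a \<le> n \<Longrightarrow> b \<le> n \<Longrightarrow> (c a, c b) \<in> R"
    and "\<And>a. a \<le> n \<Longrightarrow> c a \<in> W"
    and "\<And>a. a \<le> n \<Longrightarrow> sat W R V (c a) (\<phi> a)"
  shows "i + k \<le> Suc n \<Longrightarrow> (\<forall>a\<le>n. (y, c a) \<in> R) \<Longrightarrow> sat W R V y (Pc \<phi> i k)"
proof (induction k arbitrary: i y)
  case 0
  then show ?case using assms by auto
next
  case (Suc k)
  have "i \<le> n" using Suc.prems by simp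
  have "sat W R V (c i) (Pc \<phi> (Suc i) k)"
    using Suc.IH[of "Suc i" "c i"] Suc.prems assms(1) \<open>i \<le> n\<close> by auto
  moreover have "c i \<in> W" "(y, c i) \<in> R" "sat W R V (c i) (\<phi> i)"
    using assms Suc.prems \<open>i \<le> n\<close> by auto
  ultimately show ?case by auto
qed

lemma frame_trans:
  assumes "frame W R" "\<forall>\<phi> \<in> K4C n. valid_in W R \<phi>"
    and "(x,y) \<in> R" "(y,z) \<in> R"
  shows "(x,z) \<in> R"
proof -
  have "valid_in W R (Imp (Dia (Dia (Var 0))) (Dia (Var 0)))"
    using assms(2) K4C.ax4 by blast
  moreover have "x \<in> W" "y \<in> W" "z \<in> W" using assms(1,3,4) unfolding frame_def by auto
  ultimately have "sat W R (\<lambda>_. {z}) x (Imp (Dia (Dia (Var 0))) (Dia (Var 0)))"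
    unfolding valid_in_def by blast
  then show ?thesis using assms(3,4) \<open>y \<in> W\<close> \<open>z \<in> W\<close> by auto
qed

lemma frame_cluster:
  assumes "frame W R" "\<forall>\<phi> \<in> K4C n. valid_in W R \<phi>" "finite W"
  shows "card {v. (w,v) \<in> R \<and> (v,w) \<in> R} \<le> n"
proof (rule ccontr)
  let ?C = "{v. (w,v) \<in> R \<and> (v,w) \<in> R}"
  assume A: "\<not> card ?C \<le> n"
  have CW: "?C \<subseteq> W" using assms(1) by (auto simp: frame_def)
  then have "finite ?C" using assms(3) by (rule finite_subset)
  obtain B where B: "B \<subseteq> ?C" "card B = Suc n"
    using A obtain_subset_with_card_n[of "Suc n" ?C] by auto
  have "finite B" using B(1) \<open>finite ?C\<close> by (rule finite_subset)
  then obtain c where c: "bij_betw c {0..<card B} B"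
    using ex_bij_betw_nat_finite by blast
  then have c: "bij_betw c {0..<Suc n} B" using B(2) by simp
  have cC: "c a \<in> ?C" if "a \<le> n" for a
  proof -
    have "c a \<in> B" using c that unfolding bij_betw_def by auto
    then show ?thesis using B(1) by blast
  qed
  have tr: "(x,z) \<in> R" if "(x,y) \<in> R" "(y,z) \<in> R" for x y z
    using frame_trans[OF assms(1,2) that] .
  have cR: "a \<le> n \<Longrightarrow> b \<le> n \<Longrightarrow> (c a, c b) \<in> R" for a b
    using cC[of a] cC[of b] tr[of "c a" w "c b"] by simp
  have cW: "a \<le> n \<Longrightarrow> c a \<in> W" for a using cC CW by blast
  have cinj: "a \<le> n \<Longrightarrow> b \<le> n \<Longrightarrow> c a = c b \<Longrightarrow> a = b" for a b
    using c by (auto simp: bij_betw_def inj_on_def)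
  define V where "V = (\<lambda>i. if i \<le> n then {c i} else {})"
  define \<phi> where "\<phi> = (\<lambda>i. Var i)"
  have "valid_in W R (CC n \<phi>)" using assms(2) K4C.axC by blast
  then have S: "sat W R V (c 0) (CC n \<phi>)" using cW[of 0] unfolding valid_in_def by blast
  have satphi: "a \<le> n \<Longrightarrow> sat W R V (c a) (\<phi> a)" for a by (simp add: V_def \<phi>_def)
  have "sat W R V u (DD n \<phi>)" for u
  proof (unfold sat_DD, intro allI impI notI)
    fix i j assume ij: "i < j \<and> j \<le> n" and s: "sat W R V u (\<phi> i) \<and> sat W R V u (\<phi> j)"
    then have "i \<le> n" by simp
    then have "u = c i" "u = c j" using ij s by (auto simp: V_def \<phi>_def split: if_splits)
    then show False using cinj[of i j] ij \<open>i \<le> n\<close> by simp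
  qed
  then have "sat W R V (c 0) (BoxStar (DD n \<phi>))"
    unfolding BoxStar_def by simp
  moreover have "sat W R V (c 0) (Dia (\<phi> 0))"
    using cR[of 0 0] cW[of 0] by (auto simp: V_def \<phi>_def)
  moreover have "\<not> sat W R V (c 0) (Dia (And (\<phi> 0) (Neg (PP n \<phi>))))"
  proof
    assume "sat W R V (c 0) (Dia (And (\<phi> 0) (Neg (PP n \<phi>))))"
    then obtain u where "u \<in> W" "sat W R V u (\<phi> 0)" "\<not> sat W R V u (PP n \<phi>)" by auto
    then have "u = c 0" by (simp add: V_def \<phi>_def)
    moreover have "sat W R V (c 0) (Pc \<phi> 1 n)"
      using sat_Pc[OF cR cW satphi, where i=1 and k=n and y="c 0"] cR by auto
    ultimately show False using \<open>\<not> sat W R V u (PP n \<phi>)\<close> by (simp add: PP_def)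
  qed
  ultimately show False using S unfolding CC_def sat.simps(6) by blast
qed




lemma openin_up: "openin (up_topology W R) A \<longleftrightarrow> A \<subseteq> W \<and> (\<forall>x\<in>A. \<forall>y. (x,y) \<in> R \<longrightarrow> y \<in> A)"
proof -
  have "istopology (\<lambda>U. U \<subseteq> W \<and> (\<forall>x \<in> U. \<forall>y. (x, y) \<in> R \<longrightarrow> y \<in> U))"
    unfolding istopology_def by blast
  then show ?thesis unfolding up_topology_def by simp
qed

lemma topspace_up: assumes "R \<subseteq> W \<times> W" shows "topspace (up_topology W R) = W"
  unfolding topspace_def openin_up using assms by blast

locale constr =
  fixes W :: "'w set" and R :: "'w rel" and n :: nat and U :: "nat set set"
    and P :: "'a set" and g :: "'a \<Rightarrow> 'w \<times> nat"
  assumes frm: "R \<subseteq> W \<times> W"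
    and tr: "\<And>x y z. (x,y) \<in> R \<Longrightarrow> (y,z) \<in> R \<Longrightarrow> (x,z) \<in> R"
    and clus: "\<And>w. card {v. (w,v) \<in> R \<and> (v,w) \<in> R} \<le> n"
    and finW: "finite W"
    and n1: "n \<ge> 1"
    and U_univ: "UNIV \<in> U"
    and U_mono: "\<And>A B. A \<in> U \<Longrightarrow> A \<subseteq> B \<Longrightarrow> B \<in> U"
    and U_int: "\<And>A B. A \<in> U \<Longrightarrow> B \<in> U \<Longrightarrow> A \<inter> B \<in> U"
    and U_ultra: "\<And>A. A \<notin> U \<Longrightarrow> - A \<in> U"
    and U_free: "\<And>A. finite A \<Longrightarrow> A \<notin> U"
    and bij: "bij_betw g P (W \<times> UNIV)"
begin

definition sl :: "'a set \<Rightarrow> 'w \<Rightarrow> nat set" where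
  "sl Q v = {m. \<exists>p\<in>Q. g p = (v,m)}"

definition opn :: "'a set \<Rightarrow> bool" where
  "opn Q \<longleftrightarrow> Q \<subseteq> P \<and> (\<forall>p\<in>Q. \<forall>v. (fst (g p), v) \<in> R \<longrightarrow> sl Q v \<in> U)"

definition XX :: "'a topology" where "XX = topology opn"

definition ff :: "'a \<Rightarrow> 'w" where "ff p = fst (g p)"

lemma ginj: "p \<in> P \<Longrightarrow> q \<in> P \<Longrightarrow> g p = g q \<Longrightarrow> p = q"
  using bij by (auto simp: bij_betw_def inj_on_def)

lemma gsurj: assumes "v \<in> W" shows "\<exists>p\<in>P. g p = (v,m)"
proof -
  have "(v,m) \<in> g ` P" using bij assms unfolding bij_betw_def by simp
  then show ?thesis by (metis imageE)
qed

lemma gW: assumes "p \<in> P" shows "fst (g p) \<in> W"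
proof -
  have "g p \<in> W \<times> UNIV" using bij assms unfolding bij_betw_def by blast
  then show ?thesis by (simp add: mem_Times_iff)
qed

lemma U_ne: "A \<in> U \<Longrightarrow> A \<noteq> {}" using U_free by auto

lemma U_cof: "finite B \<Longrightarrow> - B \<in> U" using U_free[of B] U_ultra[of B] by simp

lemma U_disj: "A \<in> U \<Longrightarrow> B \<in> U \<Longrightarrow> A \<inter> B = {} \<Longrightarrow> False"
  using U_int[of A B] U_ne[of "A \<inter> B"] by simp

lemma sl_Int: assumes "A1 \<subseteq> P" "A2 \<subseteq> P" shows "sl (A1 \<inter> A2) v = sl A1 v \<inter> sl A2 v"
proof
  show "sl (A1 \<inter> A2) v \<subseteq> sl A1 v \<inter> sl A2 v" unfolding sl_def by blast
  show "sl A1 v \<inter> sl A2 v \<subseteq> sl (A1 \<inter> A2) v"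
  proof
    fix m assume "m \<in> sl A1 v \<inter> sl A2 v"
    then obtain p q where "p \<in> A1" "g p = (v,m)" "q \<in> A2" "g q = (v,m)" unfolding sl_def by blast
    moreover then have "p = q" using ginj[of p q] assms by auto
    ultimately show "m \<in> sl (A1 \<inter> A2) v" unfolding sl_def by blast
  qed
qed

lemma sl_mono: "A1 \<subseteq> A2 \<Longrightarrow> sl A1 v \<subseteq> sl A2 v"
  unfolding sl_def by blast

lemma istop: "istopology opn"
  unfolding istopology_def
proof safe
  fix S T assume "opn S" "opn T"
  then show "opn (S \<inter> T)"
    unfolding opn_def by (auto simp: sl_Int intro: U_int)
next
  fix K assume K: "\<forall>K0\<in>K. opn K0"
  show "opn (\<Union>K)"
    unfolding opn_def
  proof safe
    fix x X assume "x \<in> X" "X \<in> K"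
    then show "x \<in> P" using K by (auto simp: opn_def)
  next
    fix p X v assume "p \<in> X" "X \<in> K" "(fst (g p), v) \<in> R"
    then have "sl X v \<in> U" using K by (auto simp: opn_def)
    moreover have "sl X v \<subseteq> sl (\<Union>K) v" using \<open>X \<in> K\<close> by (intro sl_mono) auto
    ultimately show "sl (\<Union>K) v \<in> U" using U_mono by blast
  qed
qed

lemma openin_XX: "openin XX Q \<longleftrightarrow> opn Q"
  unfolding XX_def using istop by simp

lemma opn_P: "opn P"
proof -
  have "sl P v = UNIV" if "v \<in> W" for v
    using gsurj[OF that] by (auto simp: sl_def)
  then show ?thesis unfolding opn_def using frm U_univ by auto
qed

lemma topspace_XX: "topspace XX = P"
  unfolding topspace_def openin_XX using opn_P by (auto simp: opn_def)

definition nb :: "'a \<Rightarrow> nat set \<Rightarrow> 'a set" where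
  "nb p B = {p} \<union> {q \<in> P. (ff p, ff q) \<in> R \<and> snd (g q) \<notin> B}"

lemma opn_nb: assumes "p \<in> P" "finite B" shows "opn (nb p B)"
  unfolding opn_def
proof safe
  show "x \<in> nb p B \<Longrightarrow> x \<in> P" for x using assms by (auto simp: nb_def)
next
  fix q v assume q: "q \<in> nb p B" "(fst (g q), v) \<in> R"
  then have pv: "(ff p, v) \<in> R" using tr by (auto simp: nb_def ff_def)
  then have "v \<in> W" using frm by auto
  have "- B \<subseteq> sl (nb p B) v"
  proof
    fix m assume "m \<in> - B"
    obtain q' where "q' \<in> P" "g q' = (v,m)" using gsurj[OF \<open>v \<in> W\<close>] by blast
    then show "m \<in> sl (nb p B) v" using pv \<open>m \<in> - B\<close>
      unfolding sl_def nb_def ff_def by force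
  qed
  then show "sl (nb p B) v \<in> U" using U_cof[OF assms(2)] U_mono by blast
qed

lemma contXX: "continuous_map XX (up_topology W R) ff"
  unfolding continuous_map_def topspace_XX topspace_up[OF frm] openin_XX
proof safe
  show "p \<in> P \<Longrightarrow> ff p \<in> W" for p using gW by (simp add: ff_def)
next
  fix A assume A: "openin (up_topology W R) A"
  then have Aup: "\<And>x y. x \<in> A \<Longrightarrow> (x,y) \<in> R \<Longrightarrow> y \<in> A" by (simp add: openin_up)
  show "opn {x \<in> P. ff x \<in> A}"
    unfolding opn_def
  proof safe
    fix p v assume p: "p \<in> P" "ff p \<in> A" "(fst (g p), v) \<in> R"
    then have vA: "v \<in> A" using Aup by (simp add: ff_def)
    have "v \<in> W" using p(3) frm by auto
    have "UNIV \<subseteq> sl {x \<in> P. ff x \<in> A} v"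
    proof
      fix m obtain q where "q \<in> P" "g q = (v,m)" using gsurj[OF \<open>v \<in> W\<close>] by blast
      then show "m \<in> sl {x \<in> P. ff x \<in> A} v" using vA unfolding sl_def ff_def by force
    qed
    then show "sl {x \<in> P. ff x \<in> A} v \<in> U" using U_univ U_mono by blast
  qed
qed

lemma openXX: "open_map XX (up_topology W R) ff"
  unfolding open_map_def openin_XX openin_up
proof safe
  fix Q p assume "opn Q" "p \<in> Q"
  then show "ff p \<in> W" using gW by (auto simp: opn_def ff_def)
next
  fix Q p v assume Q: "opn Q" "p \<in> Q" "(ff p, v) \<in> R"
  then have "sl Q v \<in> U" by (auto simp: opn_def ff_def)
  then obtain m where "m \<in> sl Q v" using U_ne by blast
  then obtain q where "q \<in> Q" "g q = (v,m)" unfolding sl_def by blast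
  then show "v \<in> ff ` Q" unfolding ff_def by force
qed

lemma crowdedXX: assumes "(w,w) \<in> R" shows "crowded_in XX {x \<in> topspace XX. ff x = w}"
  unfolding crowded_in_def derived_set_of_def topspace_XX openin_XX
proof safe
  fix p T assume p: "p \<in> P" "w = ff p" "p \<in> T" "opn T"
  then have "sl T w \<in> U" using assms by (auto simp: opn_def ff_def)
  then have "infinite (sl T w)" using U_free by blast
  then obtain m where "m \<in> sl T w" "m \<noteq> snd (g p)"
    by (metis finite.emptyI finite_insert insertCI subsetI finite_subset)
  then obtain q where q: "q \<in> T" "g q = (w,m)" unfolding sl_def by blast
  then have "q \<noteq> p" using \<open>m \<noteq> snd (g p)\<close> by auto
  moreover have "q \<in> P" using q p(4) by (auto simp: opn_def)
  ultimately show "\<exists>y. y \<noteq> p \<and> y \<in> {x \<in> P. ff x = ff p} \<and> y \<in> T"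
    using q p(2) by (auto simp: ff_def)
qed

lemma irreflXX: assumes "(w,w) \<notin> R"
  shows "{x \<in> topspace XX. ff x = w} \<inter> XX derived_set_of {x \<in> topspace XX. ff x = w} = {}"
  unfolding derived_set_of_def topspace_XX openin_XX
proof safe
  fix p assume p: "p \<in> P" "w = ff p"
    and H: "\<forall>T. p \<in> T \<and> opn T \<longrightarrow> (\<exists>y. y \<noteq> p \<and> y \<in> {x \<in> P. ff x = ff p} \<and> y \<in> T)"
  have "opn (nb p {})" using opn_nb[OF p(1)] by simp
  moreover have "p \<in> nb p {}" by (simp add: nb_def)
  ultimately obtain y where "y \<noteq> p" "ff y = ff p" "y \<in> nb p {}" using H by blast
  then have "(ff p, ff p) \<in> R" by (auto simp: nb_def)
  then show "p \<in> {}" using assms p(2) by simp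
qed

lemma TD_XX: "T_D XX"
  unfolding T_D_def
proof
  fix x assume x: "x \<in> topspace XX"
  have "XX derived_set_of {x} = {}"
    unfolding derived_set_of_def topspace_XX openin_XX
  proof safe
    fix y assume y: "y \<in> P"
      and H: "\<forall>T. y \<in> T \<and> opn T \<longrightarrow> (\<exists>z. z \<noteq> y \<and> z \<in> {x} \<and> z \<in> T)"
    have "opn (nb y {snd (g x)})" using opn_nb[OF y] by simp
    moreover have "y \<in> nb y {snd (g x)}" by (simp add: nb_def)
    ultimately have "x \<noteq> y" "x \<in> nb y {snd (g x)}" using H by blast+
    then show "y \<in> {}" by (simp add: nb_def)
  qed
  then show "closedin XX (XX derived_set_of {x})" by simp
qed

lemma surjXX: "ff ` topspace XX = W"
  unfolding topspace_XX
proof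
  show "ff ` P \<subseteq> W" using gW by (auto simp: ff_def)
  show "W \<subseteq> ff ` P"
  proof
    fix v assume "v \<in> W"
    then obtain p where "p \<in> P" "g p = (v,0)" using gsurj by blast
    then show "v \<in> ff ` P" unfolding ff_def by force
  qed
qed

lemma herXX: "hered_irresolvable (Suc n) XX"
  unfolding hered_irresolvable_def resolvable_def
proof (intro allI impI notI)
  fix S assume S: "S \<subseteq> topspace XX" "S \<noteq> {}"
    and "\<exists>D :: nat \<Rightarrow> 'a set.
        (\<forall>i<Suc n. D i \<noteq> {} \<and> D i \<subseteq> topspace (subtopology XX S) \<and>
            subtopology XX S closure_of (D i) = topspace (subtopology XX S)) \<and>
        (\<forall>i<Suc n. \<forall>j<Suc n. i \<noteq> j \<longrightarrow> D i \<inter> D j = {})"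
  then obtain D :: "nat \<Rightarrow> 'a set" where
    D1: "\<forall>i<Suc n. D i \<noteq> {} \<and> D i \<subseteq> topspace (subtopology XX S) \<and>
            subtopology XX S closure_of (D i) = topspace (subtopology XX S)"
    and D2: "\<forall>i<Suc n. \<forall>j<Suc n. i \<noteq> j \<longrightarrow> D i \<inter> D j = {}"
    by blast
  have SP: "S \<subseteq> P" using S(1) topspace_XX by simp
  have tsub: "topspace (subtopology XX S) = S" using SP topspace_XX by auto
  have DS: "D i \<subseteq> S" if "i < Suc n" for i using D1 that tsub by auto
  have dense: "T \<inter> D i \<noteq> {}" if i: "i < Suc n" and T: "opn T" and TS: "T \<inter> S \<noteq> {}" for i T
  proof -
    obtain x where x: "x \<in> T" "x \<in> S" using TS by blast
    then have "x \<in> subtopology XX S closure_of (D i)" using D1 i tsub by auto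
    moreover have "openin (subtopology XX S) (T \<inter> S)"
      unfolding openin_subtopology openin_XX using T by blast
    ultimately have "\<exists>y. y \<in> D i \<and> y \<in> T \<inter> S" using x unfolding in_closure_of by blast
    then show ?thesis by blast
  qed
  define A where "A = ff ` S"
  have AW: "A \<subseteq> W" using SP gW by (auto simp: A_def ff_def)
  then have finA: "finite A" using finW finite_subset by auto
  define up where "up x = insert x {v \<in> A. (x,v) \<in> R}" for x
  have finup: "finite (up x)" for x using finA by (simp add: up_def)
  obtain x0 where "x0 \<in> S" using S(2) by blast
  then have "ff x0 \<in> A" by (simp add: A_def)
  then obtain w where wA: "w \<in> A" and wmin: "\<And>v. v \<in> A \<Longrightarrow> card (up w) \<le> card (up v)"
    using ex_has_least_nat[of "\<lambda>x. x \<in> A" "ff x0" "\<lambda>x. card (up x)"] by blast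
  have wmax: "(v,w) \<in> R" if "v \<in> A" "(w,v) \<in> R" for v
  proof (rule ccontr)
    assume nvw: "(v,w) \<notin> R"
    have "v \<noteq> w" using nvw that(2) by auto
    have "up v \<subseteq> up w" using that tr unfolding up_def by blast
    moreover have "w \<in> up w" "w \<notin> up v" using nvw \<open>v \<noteq> w\<close> unfolding up_def by auto
    ultimately have "up v \<subset> up w" by blast
    then have "card (up v) < card (up w)" using finup by (simp add: psubset_card_mono)
    then show False using wmin[OF that(1)] by simp
  qed
  obtain x where x: "x \<in> S" "ff x = w" using wA by (auto simp: A_def)
  have xP: "x \<in> P" using x SP by blast
  have n1': "1 < Suc n" using n1 by simp
  show False
  proof (cases "(w,w) \<in> R")
    case False
    let ?T = "nb x {}"
    have Topn: "opn ?T" using opn_nb[OF xP] by simp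
    have TS: "?T \<inter> S \<subseteq> {x}"
    proof
      fix q assume q: "q \<in> ?T \<inter> S"
      show "q \<in> {x}"
      proof (rule ccontr)
        assume "q \<notin> {x}"
        then have "(w, ff q) \<in> R" using q x by (auto simp: nb_def)
        moreover have "ff q \<in> A" using q by (simp add: A_def)
        ultimately have "(ff q, w) \<in> R" using wmax by blast
        then show False using tr[OF \<open>(w, ff q) \<in> R\<close>] False by blast
      qed
    qed
    have xT: "x \<in> ?T \<inter> S" using x by (simp add: nb_def)
    have "?T \<inter> D 0 \<noteq> {}" using dense[OF _ Topn] xT by blast
    then have "x \<in> D 0" using TS DS[of 0] by blast
    have "?T \<inter> D 1 \<noteq> {}" using dense[OF n1' Topn] xT by blast
    then have "x \<in> D 1" using TS DS[OF n1'] by blast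
    then show False using \<open>x \<in> D 0\<close> D2 n1' by auto
  next
    case True
    define C where "C = {v. (w,v) \<in> R \<and> (v,w) \<in> R}"
    have cardC: "card C \<le> n" using clus by (simp add: C_def)
    have finC: "finite C" using finW frm finite_subset[of C W] unfolding C_def by blast
    have "\<exists>j<Suc n. \<forall>v\<in>C. sl (D j) v \<notin> U"
    proof (rule ccontr)
      assume "\<not> ?thesis"
      then have "\<forall>j\<in>{..<Suc n}. \<exists>v. v \<in> C \<and> sl (D j) v \<in> U" by auto
      then obtain h where h: "\<And>j. j \<in> {..<Suc n} \<Longrightarrow> h j \<in> C \<and> sl (D j) (h j) \<in> U"
        by metis
      have "inj_on h {..<Suc n}"
      proof (rule inj_onI)
        fix i j assume ij: "i \<in> {..<Suc n}" "j \<in> {..<Suc n}" "h i = h j"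
        show "i = j"
        proof (rule ccontr)
          assume "i \<noteq> j"
          then have "D i \<inter> D j = {}" using D2 ij by auto
          moreover have "sl (D i) (h i) \<inter> sl (D j) (h i) = sl (D i \<inter> D j) (h i)"
            using DS ij SP by (intro sl_Int[symmetric]) auto
          ultimately have "sl (D i) (h i) \<inter> sl (D j) (h i) = {}" by (simp add: sl_def)
          then show False using U_disj h[OF ij(1)] h[OF ij(2)] ij(3) by metis
        qed
      qed
      moreover have "h ` {..<Suc n} \<subseteq> C" using h by blast
      ultimately have "card {..<Suc n} \<le> card C" using finC by (rule card_inj_on_le)
      then show False using cardC by simp
    qed
    then obtain j where j: "j < Suc n" and jC: "\<And>v. v \<in> C \<Longrightarrow> sl (D j) v \<notin> U" by blast
    define Q where "Q = {q \<in> P. (w, ff q) \<in> R}"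
    define T where "T = Q - D j"
    have Qnb: "Q = nb x {}" using True x xP unfolding Q_def nb_def by auto
    have Qopn: "opn Q" using Qnb opn_nb[OF xP] by simp
    have Topn: "opn T"
      unfolding opn_def
    proof safe
      show "q \<in> T \<Longrightarrow> q \<in> P" for q by (simp add: T_def Q_def)
    next
      fix q v assume q: "q \<in> T" "(fst (g q), v) \<in> R"
      then have wv: "(w,v) \<in> R" using tr by (auto simp: T_def Q_def ff_def)
      then have vW: "v \<in> W" using frm by auto
      have sub: "- sl (D j) v \<subseteq> sl T v"
      proof
        fix m assume m: "m \<in> - sl (D j) v"
        obtain q' where q': "q' \<in> P" "g q' = (v,m)" using gsurj[OF vW] by blast
        then have "q' \<notin> D j" using m by (auto simp: sl_def)
        then have "q' \<in> T" using q' wv by (simp add: T_def Q_def ff_def)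
        then show "m \<in> sl T v" using q' by (auto simp: sl_def)
      qed
      have "- sl (D j) v \<in> U"
      proof (cases "(v,w) \<in> R")
        case True
        then have "v \<in> C" using wv by (simp add: C_def)
        then show ?thesis using jC U_ultra by blast
      next
        case False
        have "sl (D j) v = {}"
        proof (rule ccontr)
          assume "sl (D j) v \<noteq> {}"
          then obtain m q' where "q' \<in> D j" "g q' = (v,m)" by (auto simp: sl_def)
          then have "v \<in> A" using DS[OF j] by (force simp: A_def ff_def)
          then show False using wmax wv False by blast
        qed
        then show ?thesis using U_univ by simp
      qed
      then show "sl T v \<in> U" using sub U_mono by blast
    qed
    define j' where "j' = (if j = 0 then 1 else 0::nat)"
    have j': "j' < Suc n" "j' \<noteq> j" using n1' by (auto simp: j'_def)
    have "x \<in> Q" using True xP x by (simp add: Q_def)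
    then have "Q \<inter> D j' \<noteq> {}" using dense[OF j'(1) Qopn] x by blast
    then obtain y where y: "y \<in> Q" "y \<in> D j'" by blast
    then have "y \<notin> D j" using D2 j j' by blast
    then have "y \<in> T \<inter> S" using y DS[OF j'(1)] by (auto simp: T_def)
    then have "T \<inter> D j \<noteq> {}" using dense[OF j Topn] by blast
    then show False by (auto simp: T_def)
  qed
qed

end



theorem theorem5:
  fixes n :: nat and W :: "'w set" and R :: "'w rel"
  assumes "n \<ge> 1"
    and "finite W" and "frame W R"
    and "\<forall>\<phi> \<in> K4C n. valid_in W R \<phi>"
  shows "\<exists>(X :: nat set set topology) (f :: nat set set \<Rightarrow> 'w).
           hered_irresolvable (Suc n) X \<and> T_D X \<and>
           d_morphism X W R f \<and> f ` topspace X = W"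
proof -
  obtain F :: "nat filter" where F: "F \<noteq> bot" "F \<le> cofinite"
    "\<And>P. eventually P F \<or> eventually (\<lambda>x. \<not> P x) F"
    using ex_ultra_nat by blast
  define U where "U = {A. eventually (\<lambda>x. x \<in> A) F}"
  obtain e :: "'w \<Rightarrow> nat" where e: "inj_on e W"
    using finite_imp_inj_to_nat_seg[OF assms(2)] by blast
  define c :: "'w \<times> nat \<Rightarrow> nat set set" where "c = (\<lambda>(w,m). {{prod_encode (e w, m)}})"
  have cinj: "inj_on c (W \<times> UNIV)"
  proof (rule inj_onI)
    fix a b assume ab: "a \<in> W \<times> UNIV" "b \<in> W \<times> UNIV" "c a = c b"
    obtain w m w' m' where a: "a = (w,m)" and b: "b = (w',m')" by (cases a, cases b) blast
    have "prod_encode (e w, m) = prod_encode (e w', m')" using ab(3) by (simp add: a b c_def)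
    then have "e w = e w'" "m = m'" using inj_prod_encode[of UNIV] by (auto dest: injD)
    then show "a = b" using e ab(1,2) by (auto simp: a b inj_on_def)
  qed
  define P where "P = c ` (W \<times> UNIV)"
  define g where "g = inv_into (W \<times> UNIV) c"
  have bij: "bij_betw g P (W \<times> UNIV)"
    unfolding g_def P_def by (rule bij_betw_inv_into) (rule inj_on_imp_bij_betw[OF cinj])
  have frm: "R \<subseteq> W \<times> W" using assms(3) by (simp add: frame_def)
  interpret constr W R n U P g
  proof
    show "R \<subseteq> W \<times> W" by (fact frm)
    show "(x,z) \<in> R" if "(x,y) \<in> R" "(y,z) \<in> R" for x y z
      using frame_trans[OF assms(3,4) that] .
    show "card {v. (w,v) \<in> R \<and> (v,w) \<in> R} \<le> n" for w
      using frame_cluster[OF assms(3,4,2)] .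
    show "finite W" by (fact assms(2))
    show "n \<ge> 1" by (fact assms(1))
    show "UNIV \<in> U" by (simp add: U_def)
    show "B \<in> U" if "A \<in> U" "A \<subseteq> B" for A B
      using that unfolding U_def by (auto elim: eventually_mono)
    show "A \<inter> B \<in> U" if "A \<in> U" "B \<in> U" for A B
      using that unfolding U_def by (simp add: eventually_conj)
    show "- A \<in> U" if "A \<notin> U" for A
      using that F(3)[of "\<lambda>x. x \<in> A"] unfolding U_def by simp
    show "A \<notin> U" if "finite A" for A
    proof
      assume "A \<in> U"
      moreover have "eventually (\<lambda>x. x \<notin> A) cofinite"
        using that by (simp add: eventually_cofinite)
      then have "eventually (\<lambda>x. x \<notin> A) F" using F(2) by (simp add: le_filter_def)
      ultimately have "eventually (\<lambda>x. False) F"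
        unfolding U_def by (auto elim: eventually_elim2)
      then show False using F(1) by (simp add: eventually_False)
    qed
    show "bij_betw g P (W \<times> UNIV)" by (fact bij)
  qed
  have "d_morphism XX W R ff"
    unfolding d_morphism_def using contXX openXX crowdedXX irreflXX by blast
  then show ?thesis using herXX TD_XX surjXX by blast
qed


end
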